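(* For every $\rho\in\hom_0(\mathrm{PSL}_2(\mathbb Z),\mathrm{Isom}(X))$, the orientation-preserving isometry $\rho(baba)$ is given by a matrix in $\mathrm{SL}_3(\mathbb R)$ satisfying $$\mathrm{tr}(\rho(baba))=\mathrm{tr}(\rho(baba)^{-1}).$$
   Context: $X=\mathrm{SL}_3(\mathbb R)/\mathrm{SO}(3)$ is the Riemannian symmetric space and $\mathrm{Isom}(X)$ its full isometry group. Orientation-preserving isometries are $[M]\mapsto[gM]$ with $g\in\mathrm{SL}_3(\mathbb R)$ (identified with the matrix $g$); with $M^*=(M^{-1})^T$, orientation-reversing isometries have the form $[M]\mapsto[AM^*]$, and the inversion at $[A]$ is $[M]\mapsto[AA^TM^*]$. Let $R_\theta=\begin{pmatrix}1&0&0\\0&\cos\theta&-\sin\theta\\0&\sin\theta&\cos\theta\end{pmatrix}$. Present $\mathrm{PSL}_2(\mathbb Z)=\langle a,b\mid a^2=b^3=1\rangle$; $\hom_0(\mathrm{PSL}_2(\mathbb Z),\mathrm{Isom}(X))$ is the set of homomorphisms with $\rho(a)$ an inversion and $\rho(b)$ conjugate to $[M]\mapsto[R_{2\pi/3}M]$. *)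

theory Defs
  imports "HOL-Analysis.Analysis"
begin

type_synonym m3 = "real^3^3"

definition SL3 :: "m3 set" where
  "SL3 = {g. det g = 1}"

text \<open>The symmetric space X = SL3(R)/SO(3). The coset [M] is represented by the
  matrix M M^T (the map [M] to M M^T is a bijection of SL3(R)/SO(3) onto its image).\<close>
definition Xsym :: "m3 set" where
  "Xsym = {M ** transpose M | M. M \<in> SL3}"

text \<open>Orientation-preserving isometry [M] to [gM], in terms of P = M M^T.\<close>
definition act_pos :: "m3 \<Rightarrow> m3 \<Rightarrow> m3" where
  "act_pos g P = g ** P ** transpose g"

text \<open>Orientation-reversing isometry [M] to [A M^*], M^* = (M^-1)^T, in terms of P = M M^T.\<close>
definition act_neg :: "m3 \<Rightarrow> m3 \<Rightarrow> m3" where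
  "act_neg A P = A ** matrix_inv P ** transpose A"

definition IsomX :: "(m3 \<Rightarrow> m3) set" where
  "IsomX = {f. (\<exists>g\<in>SL3. \<forall>P\<in>Xsym. f P = act_pos g P) \<or>
               (\<exists>A\<in>SL3. \<forall>P\<in>Xsym. f P = act_neg A P)}"

text \<open>Inversion at [A]: [M] to [A A^T M^*].\<close>
definition is_inversion :: "(m3 \<Rightarrow> m3) \<Rightarrow> bool" where
  "is_inversion f \<longleftrightarrow> (\<exists>A\<in>SL3. \<forall>P\<in>Xsym. f P = act_neg (A ** transpose A) P)"

definition Rot :: "real \<Rightarrow> m3" where
  "Rot \<theta> = vector [vector [1, 0, 0],
                   vector [0, cos \<theta>, - sin \<theta>],
                   vector [0, sin \<theta>, cos \<theta>]]"

definition conj_isom :: "(m3 \<Rightarrow> m3) \<Rightarrow> (m3 \<Rightarrow> m3) \<Rightarrow> bool" where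
  "conj_isom f r \<longleftrightarrow> (\<exists>h\<in>IsomX. \<exists>h'\<in>IsomX.
      (\<forall>P\<in>Xsym. h (h' P) = P \<and> h' (h P) = P) \<and>
      (\<forall>P\<in>Xsym. f P = h (r (h' P))))"

text \<open>Hom_0(PSL2(Z), Isom(X)) via the presentation <a,b | a^2 = b^3 = 1>:
  a homomorphism is given by the images ra = rho(a), rb = rho(b) satisfying the relations.\<close>
definition hom0 :: "(m3 \<Rightarrow> m3) \<Rightarrow> (m3 \<Rightarrow> m3) \<Rightarrow> bool" where
  "hom0 ra rb \<longleftrightarrow> ra \<in> IsomX \<and> rb \<in> IsomX \<and>
     (\<forall>P\<in>Xsym. ra (ra P) = P) \<and> (\<forall>P\<in>Xsym. rb (rb (rb P)) = P) \<and>
     is_inversion ra \<and> conj_isom rb (act_pos (Rot (2 * pi / 3)))"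

end

theory Submission
  imports Defs
begin

definition D3 :: "real \<Rightarrow> real \<Rightarrow> real \<Rightarrow> m3" where
 "D3 a b c = (\<chi> i j. if i = j then (if i = 1 then a else if i = 2 then b else c) else 0)"
lemma D3_mul: "D3 a b c ** D3 x y z = D3 (a*x) (b*y) (c*z)"
  unfolding D3_def matrix_matrix_mult_def by (simp add: vec_eq_iff sum_3 forall_3)
lemma D3_tr: "transpose (D3 a b c) = D3 a b c"
  unfolding D3_def transpose_def by (simp add: vec_eq_iff forall_3)
lemma D3_one: "D3 1 1 1 = mat 1"
  unfolding D3_def mat_def by (simp add: vec_eq_iff forall_3)
lemma D3_det: "det (D3 a b c) = a*b*c"
  unfolding D3_def by (simp add: det_3)
lemma D3_trace: "trace (D3 a b c) = a+b+c"
  unfolding D3_def trace_def by (simp add: sum_3)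

lemma trace_tr: "trace (transpose (A::m3)) = trace A"
  unfolding trace_def transpose_def by simp

lemma inv_unique: fixes A B :: m3 assumes "A ** B = mat 1" shows "matrix_inv A = B"
proof -
  have BA: "B ** A = mat 1" using assms matrix_left_right_inverse by blast
  have "invertible A" using assms BA invertible_def by blast
  then have "A ** matrix_inv A = mat 1 \<and> matrix_inv A ** A = mat 1"
    unfolding invertible_def matrix_inv_def by (rule someI_ex)
  then have "matrix_inv A = matrix_inv A ** (A ** B)" using assms by simp
  also have "\<dots> = B" by (simp add: matrix_mul_assoc \<open>_ \<and> _\<close>)
  finally show ?thesis .
qed

lemma inv_props: fixes A :: m3 assumes "det A \<noteq> 0"
  shows "A ** matrix_inv A = mat 1" "matrix_inv A ** A = mat 1"
proof -
  have "invertible A" using assms invertible_det_nz by blast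
  then have "A ** matrix_inv A = mat 1 \<and> matrix_inv A ** A = mat 1"
    unfolding invertible_def matrix_inv_def by (rule someI_ex)
  then show "A ** matrix_inv A = mat 1" "matrix_inv A ** A = mat 1" by auto
qed

lemma inv_det: fixes A :: m3 assumes "det A \<noteq> 0" shows "det (matrix_inv A) = 1 / det A"
proof -
  have "det A * det (matrix_inv A) = 1" using inv_props(1)[OF assms] det_mul det_I by metis
  then show ?thesis using assms by (simp add: field_simps)
qed

lemma inv_mul: fixes A B :: m3 assumes "det A \<noteq> 0" "det B \<noteq> 0"
  shows "matrix_inv (A ** B) = matrix_inv B ** matrix_inv A"
proof (rule inv_unique)
  have "A ** B ** (matrix_inv B ** matrix_inv A) = A ** (B ** matrix_inv B) ** matrix_inv A"
    by (simp add: matrix_mul_assoc)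
  then show "A ** B ** (matrix_inv B ** matrix_inv A) = mat 1"
    using inv_props[OF assms(1)] inv_props[OF assms(2)] by simp
qed

lemma inv_tr: fixes A :: m3 assumes "det A \<noteq> 0"
  shows "matrix_inv (transpose A) = transpose (matrix_inv A)"
proof (rule inv_unique)
  show "transpose A ** transpose (matrix_inv A) = mat 1"
    using inv_props(2)[OF assms] by (metis matrix_transpose_mul transpose_mat)
qed

lemma inv_inv: fixes A :: m3 assumes "det A \<noteq> 0" shows "matrix_inv (matrix_inv A) = A"
  by (rule inv_unique) (rule inv_props(2)[OF assms])

lemma inv_one: "matrix_inv (mat 1 :: m3) = mat 1"
  by (rule inv_unique) simp

definition tinv :: "m3 \<Rightarrow> m3" where "tinv E = matrix_inv (transpose E)"

lemma SL3_mul: "A \<in> SL3 \<Longrightarrow> B \<in> SL3 \<Longrightarrow> A ** B \<in> SL3"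
  unfolding SL3_def by (simp add: det_mul)
lemma SL3_tr: "A \<in> SL3 \<Longrightarrow> transpose A \<in> SL3"
  unfolding SL3_def by simp
lemma SL3_inv: "A \<in> SL3 \<Longrightarrow> matrix_inv A \<in> SL3"
  unfolding SL3_def by (simp add: inv_det)
lemma SL3_tinv: "A \<in> SL3 \<Longrightarrow> tinv A \<in> SL3"
  unfolding tinv_def by (simp add: SL3_inv SL3_tr)
lemma SL3_det: "A \<in> SL3 \<Longrightarrow> det A \<noteq> 0"
  unfolding SL3_def by simp

lemma Xsym_SL3: "P \<in> Xsym \<Longrightarrow> P \<in> SL3"
  unfolding Xsym_def SL3_def by (auto simp: det_mul)
lemma Xsym_sym: "P \<in> Xsym \<Longrightarrow> transpose P = P"
  unfolding Xsym_def by (auto simp: matrix_transpose_mul)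

lemma tinv_mul: "A \<in> SL3 \<Longrightarrow> B \<in> SL3 \<Longrightarrow> tinv (A ** B) = tinv A ** tinv B"
  unfolding tinv_def by (simp add: matrix_transpose_mul inv_mul SL3_det)
lemma tr_tinv: "A \<in> SL3 \<Longrightarrow> transpose (tinv A) = matrix_inv A"
  unfolding tinv_def by (simp add: inv_tr SL3_det)

lemma comp_nn: assumes "C \<in> SL3" "E \<in> SL3" "P \<in> SL3"
  shows "act_neg C (act_neg E P) = act_pos (C ** tinv E) P"
proof -
  have "matrix_inv (E ** matrix_inv P ** transpose E) = tinv E ** P ** matrix_inv E"
    using assms by (simp add: inv_mul SL3_det SL3_mul SL3_inv SL3_tr inv_inv tinv_def matrix_mul_assoc)
  then show ?thesis unfolding act_neg_def act_pos_def
    using assms by (simp add: matrix_transpose_mul tr_tinv matrix_mul_assoc)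
qed

lemma comp_np: assumes "C \<in> SL3" "E \<in> SL3" "P \<in> SL3"
  shows "act_neg C (act_pos E P) = act_neg (C ** tinv E) P"
proof -
  have "matrix_inv (E ** P ** transpose E) = tinv E ** matrix_inv P ** matrix_inv E"
    using assms by (simp add: inv_mul SL3_det SL3_mul SL3_inv SL3_tr inv_inv tinv_def matrix_mul_assoc)
  then show ?thesis unfolding act_neg_def act_pos_def
    using assms by (simp add: matrix_transpose_mul tr_tinv matrix_mul_assoc)
qed

lemma comp_pn: "act_pos C (act_neg E P) = act_neg (C ** E) P"
  unfolding act_neg_def act_pos_def by (simp add: matrix_transpose_mul matrix_mul_assoc)

lemma comp_pp: "act_pos C (act_pos E P) = act_pos (C ** E) P"
  unfolding act_neg_def act_pos_def by (simp add: matrix_transpose_mul matrix_mul_assoc)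

lemma pos_Xsym: assumes "C \<in> SL3" "P \<in> Xsym" shows "act_pos C P \<in> Xsym"
proof -
  obtain M where M: "M \<in> SL3" "P = M ** transpose M" using assms(2) unfolding Xsym_def by auto
  have "act_pos C P = (C ** M) ** transpose (C ** M)"
    unfolding act_pos_def M by (simp add: matrix_transpose_mul matrix_mul_assoc)
  then show ?thesis unfolding Xsym_def using SL3_mul[OF assms(1) M(1)] by blast
qed

lemma neg_Xsym: assumes "C \<in> SL3" "P \<in> Xsym" shows "act_neg C P \<in> Xsym"
proof -
  obtain M where M: "M \<in> SL3" "P = M ** transpose M" using assms(2) unfolding Xsym_def by auto
  have "matrix_inv P = tinv M ** transpose (tinv M)"
    unfolding M using M(1) by (simp add: inv_mul SL3_det SL3_tr inv_tr tinv_def)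
  then have "act_neg C P = (C ** tinv M) ** transpose (C ** tinv M)"
    unfolding act_neg_def by (simp add: matrix_transpose_mul matrix_mul_assoc)
  then show ?thesis unfolding Xsym_def using SL3_mul[OF assms(1) SL3_tinv[OF M(1)]] by blast
qed

lemma isom_Xsym: assumes "f \<in> IsomX" "P \<in> Xsym" shows "f P \<in> Xsym"
  using assms unfolding IsomX_def using pos_Xsym neg_Xsym by fastforce

lemma one_Xsym: "mat 1 \<in> Xsym"
  unfolding Xsym_def SL3_def by (rule CollectI, rule exI[of _ "mat 1"]) simp

definition P0 :: m3 where "P0 = D3 2 2 (1/4)"

lemma P0_Xsym: "P0 \<in> Xsym"
proof -
  have "D3 (sqrt 2) (sqrt 2) (1/2) \<in> SL3" unfolding SL3_def by (simp add: D3_det)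
  moreover have "P0 = D3 (sqrt 2) (sqrt 2) (1/2) ** transpose (D3 (sqrt 2) (sqrt 2) (1/2))"
    unfolding P0_def D3_tr D3_mul by simp
  ultimately show ?thesis unfolding Xsym_def by blast
qed

lemma P0_inv: "matrix_inv P0 = D3 (1/2) (1/2) 4"
  unfolding P0_def by (rule inv_unique) (simp add: D3_mul D3_one)

lemma P0_trace: "trace P0 \<noteq> trace (matrix_inv P0)"
  unfolding P0_inv by (simp add: P0_def D3_trace)


lemma cancel_r: "X ** Y = mat 1 \<Longrightarrow> (Z::m3) ** X ** Y = Z"
  by (metis matrix_mul_assoc matrix_mul_rid)

theorem lemma4p3:
  fixes ra rb :: "m3 \<Rightarrow> m3"
  assumes "hom0 ra rb"
  shows "\<exists>g\<in>SL3. (\<forall>P\<in>Xsym. rb (ra (rb (ra P))) = act_pos g P) \<and>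
                   trace g = trace (matrix_inv g)"
proof -
  have raI: "ra \<in> IsomX" and rbI: "rb \<in> IsomX" and rb3: "\<forall>P\<in>Xsym. rb (rb (rb P)) = P"
    and inv: "is_inversion ra" using assms unfolding hom0_def by auto
  obtain A where A: "A \<in> SL3" and raA: "\<forall>P\<in>Xsym. ra P = act_neg (A ** transpose A) P"
    using inv unfolding is_inversion_def by auto
  define S where "S = A ** transpose A"
  have S: "S \<in> SL3" unfolding S_def using A by (simp add: SL3_mul SL3_tr)
  have St: "transpose S = S" unfolding S_def by (simp add: matrix_transpose_mul)
  have ra: "\<And>P. P \<in> Xsym \<Longrightarrow> ra P = act_neg S P" using raA S_def by simp
  show ?thesis
  proof (cases "\<exists>C\<in>SL3. \<forall>P\<in>Xsym. rb P = act_neg C P")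
    case True
    then obtain C where C: "C \<in> SL3" and rbC: "\<And>P. P \<in> Xsym \<Longrightarrow> rb P = act_neg C P" by auto
    define D where "D = C ** tinv (C ** tinv C)"
    have D: "D \<in> SL3" unfolding D_def using C by (simp add: SL3_mul SL3_tinv)
    have Dfix: "act_neg D P = P" if P: "P \<in> Xsym" for P
    proof -
      have "rb (rb (rb P)) = act_neg C (act_neg C (act_neg C P))"
        using P C by (simp add: rbC neg_Xsym)
      also have "\<dots> = act_neg C (act_pos (C ** tinv C) P)"
        using P C by (simp add: comp_nn Xsym_SL3)
      also have "\<dots> = act_neg D P"
        unfolding D_def using P C by (simp add: comp_np Xsym_SL3 SL3_mul SL3_tinv)
      finally show ?thesis using rb3 P by simp
    qed
    have "D ** transpose D = mat 1"
      using Dfix[OF one_Xsym] unfolding act_neg_def by (simp add: inv_one)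
    then have DtD: "transpose D ** D = mat 1" using matrix_left_right_inverse by blast
    have "trace P0 = trace (D ** (matrix_inv P0 ** transpose D))"
      using Dfix[OF P0_Xsym] unfolding act_neg_def by (simp add: matrix_mul_assoc)
    also have "\<dots> = trace (matrix_inv P0 ** transpose D ** D)"
      by (simp add: trace_mul_sym[of D])
    also have "\<dots> = trace (matrix_inv P0)" by (simp add: cancel_r[OF DtD])
    finally show ?thesis using P0_trace by simp
  next
    case False
    then obtain B where B: "B \<in> SL3" and rbB: "\<And>P. P \<in> Xsym \<Longrightarrow> rb P = act_pos B P"
      using rbI unfolding IsomX_def by auto
    define g where "g = B ** S ** tinv B ** matrix_inv S"
    have tS: "tinv S = matrix_inv S" unfolding tinv_def St ..
    have g: "g \<in> SL3" unfolding g_def using B S by (simp add: SL3_mul SL3_tinv SL3_inv)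
    have comp: "rb (ra (rb (ra P))) = act_pos g P" if P: "P \<in> Xsym" for P
    proof -
      have "rb (ra (rb (ra P))) = act_pos B (act_neg S (act_pos B (act_neg S P)))"
        using P B S by (simp add: rbB ra neg_Xsym pos_Xsym)
      also have "\<dots> = act_pos B (act_neg S (act_neg (B ** S) P))" by (simp add: comp_pn)
      also have "\<dots> = act_pos B (act_pos (S ** tinv (B ** S)) P)"
        using P B S by (simp add: comp_nn Xsym_SL3 SL3_mul)
      also have "\<dots> = act_pos g P"
        unfolding g_def comp_pp using B S by (simp add: tinv_mul tS matrix_mul_assoc)
      finally show ?thesis .
    qed
    have i1: "B ** matrix_inv B = mat 1" using inv_props(1)[OF SL3_det[OF B]] .
    have i2: "S ** matrix_inv S = mat 1" using inv_props(1)[OF SL3_det[OF S]] .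
    have i3: "matrix_inv S ** S = mat 1" using inv_props(2)[OF SL3_det[OF S]] .
    have i4: "tinv B ** transpose B = mat 1"
      unfolding tinv_def using inv_props(2)[OF SL3_det[OF SL3_tr[OF B]]] .
    have "g ** (S ** transpose B ** matrix_inv S ** matrix_inv B) = mat 1"
    proof -
      have "g ** (S ** transpose B ** matrix_inv S ** matrix_inv B)
          = B ** S ** tinv B ** matrix_inv S ** S ** transpose B ** matrix_inv S ** matrix_inv B"
        unfolding g_def by (simp add: matrix_mul_assoc)
      also have "\<dots> = B ** S ** matrix_inv S ** matrix_inv B"
        by (simp add: cancel_r[OF i3] cancel_r[OF i4])
      also have "\<dots> = mat 1" by (simp add: cancel_r[OF i2] i1)
      finally show ?thesis .
    qed
    then have ig: "matrix_inv g = S ** transpose B ** matrix_inv S ** matrix_inv B"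
      by (rule inv_unique)
    have tiS: "transpose (matrix_inv S) = matrix_inv S"
      using inv_tr[OF SL3_det[OF S]] St by simp
    have "transpose (matrix_inv g) = tinv B ** matrix_inv S ** B ** S"
      unfolding ig using B S tiS
      by (simp add: matrix_transpose_mul St tinv_def inv_tr SL3_det matrix_mul_assoc)
    then have "trace (matrix_inv g) = trace ((tinv B ** matrix_inv S) ** (B ** S))"
      by (metis trace_tr matrix_mul_assoc)
    also have "\<dots> = trace ((B ** S) ** (tinv B ** matrix_inv S))" by (rule trace_mul_sym)
    also have "\<dots> = trace g" unfolding g_def by (simp add: matrix_mul_assoc)
    finally show ?thesis using g comp by auto
  qed
qed

end
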